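(* $2^5\rightarrow 167\rightrightarrows 19$: there is an injective isotone map $\varphi:\mathbf 2^5\to F_4^-$ such that $\{\varphi(x)[p_1:=e]: x\in\mathbf 2^5,\ e\in\{0,1\}\}\supseteq F_3^-$.
   Context: $F_k$ is the set of monotone Boolean functions of $k$ variables $p_1,\dots,p_k$ (including constants $0,1$), ordered pointwise; $F_k^-=F_k\setminus\{0\}$. For $g\in F_k$ and $e\in\{0,1\}$, $g[p_1:=e]$ is the function of $p_2,\dots,p_k$ obtained by substituting $e$ for $p_1$. $\mathbf 2^i$ is $\{0,1\}^i$ with the coordinatewise order; isotone means order-preserving. Notation: $2^i\rightarrow|F_j^-|\rightrightarrows|F_{j-1}^-|$ means there is an injective isotone $\varphi:\mathbf 2^i\to F_j^-$ such that every element of $F_{j-1}^-$ equals $\varphi(x)[p_1:=e]$ for some $x$, $e$. Here $|F_3^-|=19$, $|F_4^-|=167$. *)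

theory Defs
  imports Main
begin

text \<open>Boolean functions of the variables p_1,...,p_k are represented as functions
  on assignments (nat \<Rightarrow> bool), variable p_(i+1) being coordinate i,
  that depend only on the coordinates 0,...,k-1.  Two such functions are equal iff
  they agree on all assignments, and the HOL order on functions is the pointwise order.\<close>

definition depends_only :: "nat \<Rightarrow> ((nat \<Rightarrow> bool) \<Rightarrow> bool) \<Rightarrow> bool" where
  "depends_only k f \<longleftrightarrow> (\<forall>a b. (\<forall>i<k. a i = b i) \<longrightarrow> f a = f b)"

definition monotone_bf :: "((nat \<Rightarrow> bool) \<Rightarrow> bool) \<Rightarrow> bool" where
  "monotone_bf f \<longleftrightarrow> (\<forall>a b. (\<forall>i. a i \<le> b i) \<longrightarrow> f a \<le> f b)"

definition F :: "nat \<Rightarrow> ((nat \<Rightarrow> bool) \<Rightarrow> bool) set" where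
  "F k = {f. depends_only k f \<and> monotone_bf f}"

definition Fminus :: "nat \<Rightarrow> ((nat \<Rightarrow> bool) \<Rightarrow> bool) set" where
  "Fminus k = F k - {(\<lambda>_. False)}"

text \<open>g[p_1 := e], viewed as a function of p_2,...,p_k (reindexed to p_1,...,p_(k-1)).\<close>
definition subst1 :: "((nat \<Rightarrow> bool) \<Rightarrow> bool) \<Rightarrow> bool \<Rightarrow> ((nat \<Rightarrow> bool) \<Rightarrow> bool)" where
  "subst1 g e = (\<lambda>a. g (\<lambda>i. if i = 0 then e else a (i - 1)))"

definition cube :: "nat \<Rightarrow> bool list set" where
  "cube i = {xs. length xs = i}"

definition cube_le :: "bool list \<Rightarrow> bool list \<Rightarrow> bool" where
  "cube_le xs ys \<longleftrightarrow> list_all2 (\<le>) xs ys"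

text \<open>2^i \<rightarrow> |F_j^-| \<rightrightarrows> |F_(j-1)^-|\<close>
definition arrow :: "nat \<Rightarrow> nat \<Rightarrow> bool" where
  "arrow i j \<longleftrightarrow> (\<exists>\<phi>. inj_on \<phi> (cube i) \<and> \<phi> ` cube i \<subseteq> Fminus j
      \<and> (\<forall>x\<in>cube i. \<forall>y\<in>cube i. cube_le x y \<longrightarrow> \<phi> x \<le> \<phi> y)
      \<and> Fminus (j - 1) \<subseteq> {subst1 (\<phi> x) e | x e. x \<in> cube i})"

end

theory Submission
  imports Defs
begin

definition b2n :: "bool \<Rightarrow> nat" where "b2n b = (if b then 1 else 0)"

definition F4 :: "bool list \<Rightarrow> bool \<Rightarrow> bool \<Rightarrow> bool \<Rightarrow> bool \<Rightarrow> bool" where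
  "F4 t a0 a1 a2 a3 = t ! (b2n a0 + 2 * b2n a1 + 4 * b2n a2 + 8 * b2n a3)"

definition F3 :: "bool list \<Rightarrow> bool \<Rightarrow> bool \<Rightarrow> bool \<Rightarrow> bool" where
  "F3 t a0 a1 a2 = t ! (b2n a0 + 2 * b2n a1 + 4 * b2n a2)"

fun n5 :: "bool list \<Rightarrow> nat" where
  "n5 [] = 0" | "n5 (b # bs) = b2n b + 2 * n5 bs"
declare n5.simps[simp del]

definition tabs :: "bool list list" where
  "tabs = [[False,False,False,False,False,False,False,False,False,False,False,False,False,False,False,True],
    [False,False,False,False,False,False,False,True,False,False,False,False,False,True,False,True],
    [False,False,False,False,False,False,False,False,False,False,False,False,False,False,True,True],
    [False,False,False,False,False,False,False,True,False,False,False,False,False,True,True,True],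
    [False,False,False,False,False,False,False,False,False,False,False,False,False,True,False,True],
    [False,False,False,False,False,True,False,True,False,False,False,False,False,True,True,True],
    [False,False,False,False,False,False,False,False,False,True,False,True,False,True,True,True],
    [False,True,False,True,False,True,False,True,False,True,False,True,False,True,True,True],
    [False,False,False,False,False,False,False,True,False,False,False,False,False,False,False,True],
    [False,False,False,False,False,False,False,True,False,False,False,True,False,True,False,True],
    [False,False,False,False,False,False,False,True,False,False,False,False,False,False,True,True],
    [False,False,False,True,False,False,False,True,False,False,False,True,False,True,True,True],
    [False,False,False,False,False,True,False,True,False,False,False,False,False,True,False,True],
    [False,False,False,True,False,True,False,True,False,False,False,True,False,True,True,True],
    [False,False,False,False,False,True,False,True,False,True,False,True,False,True,True,True],
    [False,True,True,True,False,True,True,True,True,True,True,True,True,True,True,True],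
    [False,False,False,False,False,False,False,True,False,False,False,True,False,False,False,True],
    [False,False,False,False,False,False,False,True,False,True,False,True,False,True,False,True],
    [False,False,False,False,False,False,False,True,False,False,False,True,False,False,True,True],
    [False,False,False,False,False,False,False,True,False,True,False,True,False,True,True,True],
    [False,False,False,True,False,False,False,True,False,False,False,True,False,True,False,True],
    [False,False,False,True,False,True,False,True,False,True,False,True,False,True,True,True],
    [False,False,False,True,False,False,False,True,False,True,False,True,True,True,True,True],
    [False,True,False,True,False,True,False,True,True,True,True,True,True,True,True,True],
    [False,False,False,False,False,False,False,True,False,False,False,True,False,True,True,True],
    [False,True,False,True,False,True,False,True,False,True,True,True,False,True,True,True],
    [False,False,False,False,False,True,False,True,False,False,False,True,False,True,True,True],
    [False,True,False,True,False,True,False,True,False,True,True,True,True,True,True,True],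
    [False,False,False,True,False,True,True,True,False,True,False,True,False,True,True,True],
    [False,True,True,True,False,True,True,True,False,True,True,True,False,True,True,True],
    [False,True,False,True,False,True,True,True,True,True,True,True,True,True,True,True],
    [True,True,True,True,True,True,True,True,True,True,True,True,True,True,True,True]]"

definition W :: "(bool list * (bool list * bool)) list" where
  "W = [([False,False,False,False,False,False,False,True], ([False,False,False,False,False], True)),
    ([False,False,False,True,False,False,False,True], ([False,False,False,True,False], True)),
    ([False,False,False,False,False,True,False,True], ([True,False,False,True,True], False)),
    ([False,False,False,True,False,True,False,True], ([False,False,False,False,True], True)),
    ([False,True,False,True,False,True,False,True], ([True,False,True,True,True], False)),
    ([False,False,False,False,False,False,True,True], ([False,False,True,False,False], True)),
    ([False,False,False,True,False,False,True,True], ([True,False,False,False,False], True)),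
    ([False,False,True,True,False,False,True,True], ([True,False,True,False,False], True)),
    ([False,False,False,False,False,True,True,True], ([True,True,False,True,True], False)),
    ([False,False,False,True,False,True,True,True], ([True,False,False,True,False], True)),
    ([False,True,False,True,False,True,True,True], ([True,True,False,True,False], True)),
    ([False,False,True,True,False,True,True,True], ([False,True,False,True,True], True)),
    ([False,True,True,True,False,True,True,True], ([True,False,True,True,False], True)),
    ([False,False,False,False,True,True,True,True], ([False,True,True,False,False], True)),
    ([False,False,False,True,True,True,True,True], ([True,False,False,False,True], True)),
    ([False,True,False,True,True,True,True,True], ([True,True,True,True,False], False)),
    ([False,False,True,True,True,True,True,True], ([False,True,True,True,False], True)),
    ([False,True,True,True,True,True,True,True], ([True,False,True,False,True], True)),
    ([True,True,True,True,True,True,True,True], ([True,True,True,False,False], True))]"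

definition phi :: "bool list \<Rightarrow> (nat \<Rightarrow> bool) \<Rightarrow> bool" where
  "phi x = (\<lambda>a. F4 (tabs ! n5 x) (a 0) (a 1) (a 2) (a 3))"

lemma len_tabs: "length (tabs ! n5 [b0,b1,b2,b3,b4]) = 16"
  by (cases b0; cases b1; cases b2; cases b3; cases b4; simp add: tabs_def b2n_def n5.simps)

lemma n5_lt: "n5 [b0,b1,b2,b3,b4] < 32"
  by (cases b0; cases b1; cases b2; cases b3; cases b4; simp add: b2n_def n5.simps)

lemma n5_dec: "[b0,b1,b2,b3,b4] = map (\<lambda>k. odd (n5 [b0,b1,b2,b3,b4] div 2^k)) [0..<5]"
  by (cases b0; cases b1; cases b2; cases b3; cases b4; simp add: b2n_def upt_rec n5.simps)

lemma edge0: "F4 (tabs ! n5 [b0,b1,b2,b3,b4]) False a1 a2 a3 \<le> F4 (tabs ! n5 [b0,b1,b2,b3,b4]) True a1 a2 a3"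
  by (cases b0; cases b1; cases b2; cases b3; cases b4; cases a1; cases a2; cases a3; simp add: tabs_def b2n_def n5.simps F4_def)
lemma edge1: "F4 (tabs ! n5 [b0,b1,b2,b3,b4]) a1 False a2 a3 \<le> F4 (tabs ! n5 [b0,b1,b2,b3,b4]) a1 True a2 a3"
  by (cases b0; cases b1; cases b2; cases b3; cases b4; cases a1; cases a2; cases a3; simp add: tabs_def b2n_def n5.simps F4_def)
lemma edge2: "F4 (tabs ! n5 [b0,b1,b2,b3,b4]) a1 a2 False a3 \<le> F4 (tabs ! n5 [b0,b1,b2,b3,b4]) a1 a2 True a3"
  by (cases b0; cases b1; cases b2; cases b3; cases b4; cases a1; cases a2; cases a3; simp add: tabs_def b2n_def n5.simps F4_def)
lemma edge3: "F4 (tabs ! n5 [b0,b1,b2,b3,b4]) a1 a2 a3 False \<le> F4 (tabs ! n5 [b0,b1,b2,b3,b4]) a1 a2 a3 True"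
  by (cases b0; cases b1; cases b2; cases b3; cases b4; cases a1; cases a2; cases a3; simp add: tabs_def b2n_def n5.simps F4_def)

lemma top_true: "F4 (tabs ! n5 [b0,b1,b2,b3,b4]) True True True True"
  by (cases b0; cases b1; cases b2; cases b3; cases b4; simp add: tabs_def b2n_def n5.simps F4_def)

lemma distinct_tabs: "distinct tabs" by (simp add: tabs_def)
lemma length_tabs: "length tabs = 32" by (simp add: tabs_def)

definition R :: "bool list \<Rightarrow> bool list \<Rightarrow> bool" where
  "R x y \<longleftrightarrow> list_all2 (\<le>) (tabs ! n5 x) (tabs ! n5 y)"

lemma R_refl: "R x x" unfolding R_def by (simp add: list_all2_refl)
lemma R_trans: "R x y \<Longrightarrow> R y z \<Longrightarrow> R x z"
  unfolding R_def by (rule list_all2_trans) auto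

lemma e0: "R [False,b1,b2,b3,b4] [True,b1,b2,b3,b4]"
  unfolding R_def by (cases b1; cases b2; cases b3; cases b4; simp add: tabs_def b2n_def n5.simps)
lemma e1: "R [b0,False,b2,b3,b4] [b0,True,b2,b3,b4]"
  unfolding R_def by (cases b0; cases b2; cases b3; cases b4; simp add: tabs_def b2n_def n5.simps)
lemma e2: "R [b0,b1,False,b3,b4] [b0,b1,True,b3,b4]"
  unfolding R_def by (cases b0; cases b1; cases b3; cases b4; simp add: tabs_def b2n_def n5.simps)
lemma e3: "R [b0,b1,b2,False,b4] [b0,b1,b2,True,b4]"
  unfolding R_def by (cases b0; cases b1; cases b2; cases b4; simp add: tabs_def b2n_def n5.simps)
lemma e4: "R [b0,b1,b2,b3,False] [b0,b1,b2,b3,True]"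
  unfolding R_def by (cases b0; cases b1; cases b2; cases b3; simp add: tabs_def b2n_def n5.simps)

lemma s0: "a \<le> c \<Longrightarrow> R [a,b1,b2,b3,b4] [c,b1,b2,b3,b4]"
  using e0 R_refl by (cases a; cases c) auto
lemma s1: "a \<le> c \<Longrightarrow> R [b0,a,b2,b3,b4] [b0,c,b2,b3,b4]"
  using e1 R_refl by (cases a; cases c) auto
lemma s2: "a \<le> c \<Longrightarrow> R [b0,b1,a,b3,b4] [b0,b1,c,b3,b4]"
  using e2 R_refl by (cases a; cases c) auto
lemma s3: "a \<le> c \<Longrightarrow> R [b0,b1,b2,a,b4] [b0,b1,b2,c,b4]"
  using e3 R_refl by (cases a; cases c) auto
lemma s4: "a \<le> c \<Longrightarrow> R [b0,b1,b2,b3,a] [b0,b1,b2,b3,c]"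
  using e4 R_refl by (cases a; cases c) auto

lemma idx_lt: "b2n a0 + 2 * b2n a1 + 4 * b2n a2 + 8 * b2n a3 < 16"
  by (simp add: b2n_def)

lemma F4_le: assumes "list_all2 (\<le>) t t'" "length t = 16"
  shows "F4 t a0 a1 a2 a3 \<le> F4 t' a0 a1 a2 a3"
proof -
  have "t ! (b2n a0 + 2 * b2n a1 + 4 * b2n a2 + 8 * b2n a3) \<le> t' ! (b2n a0 + 2 * b2n a1 + 4 * b2n a2 + 8 * b2n a3)"
  proof -
    have "b2n a0 + 2 * b2n a1 + 4 * b2n a2 + 8 * b2n a3 < length t"
      using assms(2) idx_lt[of a0 a1 a2 a3] by simp
    from list_all2_nthD[OF assms(1) this] show ?thesis .
  qed
  then show ?thesis unfolding F4_def .
qed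

lemma R_phi: assumes "R [a0,a1,a2,a3,a4] [c0,c1,c2,c3,c4]"
  shows "phi [a0,a1,a2,a3,a4] \<le> phi [c0,c1,c2,c3,c4]"
  unfolding phi_def le_fun_def
  using F4_le[OF assms[unfolded R_def] len_tabs] by blast

lemma idx_inv: "(i::nat) < 16 \<Longrightarrow> b2n (odd i) + 2 * b2n (odd (i div 2)) + 4 * b2n (odd (i div 4)) + 8 * b2n (odd (i div 8)) = i"
  proof -
  assume "i < 16"
  then have "i \<in> set [0..<16]" by simp
  then show ?thesis by (simp add: upt_rec b2n_def) (elim disjE; simp)
qed
lemma cube5: "x \<in> cube 5 \<longleftrightarrow> (\<exists>b0 b1 b2 b3 b4. x = [b0,b1,b2,b3,b4])"
proof
  assume "x \<in> cube 5"
  then have "length x = Suc (Suc (Suc (Suc (Suc 0))))" by (simp add: cube_def)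
  then show "\<exists>b0 b1 b2 b3 b4. x = [b0,b1,b2,b3,b4]" by (simp add: length_Suc_conv) blast
qed (auto simp: cube_def)

lemma phi_inj: assumes "phi [a0,a1,a2,a3,a4] = phi [c0,c1,c2,c3,c4]"
  shows "[a0,a1,a2,a3,a4] = [c0,c1,c2,c3,c4]"
proof -
  have "tabs ! n5 [a0,a1,a2,a3,a4] = tabs ! n5 [c0,c1,c2,c3,c4]"
  proof (rule nth_equalityI)
    show "length (tabs ! n5 [a0,a1,a2,a3,a4]) = length (tabs ! n5 [c0,c1,c2,c3,c4])"
      by (simp add: len_tabs)
    fix i assume "i < length (tabs ! n5 [a0,a1,a2,a3,a4])"
    then have i: "i < 16" by (simp add: len_tabs)
    have "phi [a0,a1,a2,a3,a4] (\<lambda>k. odd (i div 2^k)) = phi [c0,c1,c2,c3,c4] (\<lambda>k. odd (i div 2^k))"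
      using assms by simp
    then show "tabs ! n5 [a0,a1,a2,a3,a4] ! i = tabs ! n5 [c0,c1,c2,c3,c4] ! i"
      unfolding phi_def F4_def using idx_inv[OF i] by simp
  qed
  then have "n5 [a0,a1,a2,a3,a4] = n5 [c0,c1,c2,c3,c4]"
    using nth_eq_iff_index_eq[OF distinct_tabs] n5_lt length_tabs by metis
  then show ?thesis using n5_dec[of a0 a1 a2 a3 a4] n5_dec[of c0 c1 c2 c3 c4] by metis
qed

lemma F4_mono:
  assumes h0: "\<And>a1 a2 a3. F4 t False a1 a2 a3 \<le> F4 t True a1 a2 a3"
    and h1: "\<And>a1 a2 a3. F4 t a1 False a2 a3 \<le> F4 t a1 True a2 a3"
    and h2: "\<And>a1 a2 a3. F4 t a1 a2 False a3 \<le> F4 t a1 a2 True a3"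
    and h3: "\<And>a1 a2 a3. F4 t a1 a2 a3 False \<le> F4 t a1 a2 a3 True"
  shows "monotone_bf (\<lambda>a. F4 t (a 0) (a 1) (a 2) (a 3))"
  unfolding monotone_bf_def
proof (intro allI impI)
  fix a b :: "nat \<Rightarrow> bool" assume le: "\<forall>i. a i \<le> b i"
  have "F4 t (a 0) (a 1) (a 2) (a 3) \<le> F4 t (b 0) (a 1) (a 2) (a 3)"
    using h0 le[rule_format, of 0] by (cases "a 0"; cases "b 0") auto
  also have "\<dots> \<le> F4 t (b 0) (b 1) (a 2) (a 3)"
    using h1 le[rule_format, of 1] by (cases "a 1"; cases "b 1") auto
  also have "\<dots> \<le> F4 t (b 0) (b 1) (b 2) (a 3)"
    using h2 le[rule_format, of 2] by (cases "a 2"; cases "b 2") auto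
  also have "\<dots> \<le> F4 t (b 0) (b 1) (b 2) (b 3)"
    using h3 le[rule_format, of 3] by (cases "a 3"; cases "b 3") auto
  finally show "F4 t (a 0) (a 1) (a 2) (a 3) \<le> F4 t (b 0) (b 1) (b 2) (b 3)" .
qed

lemma phi_in: "phi [b0,b1,b2,b3,b4] \<in> Fminus 4"
proof -
  have "monotone_bf (phi [b0,b1,b2,b3,b4])"
    unfolding phi_def by (rule F4_mono) (rule edge0 edge1 edge2 edge3)+
  moreover have "depends_only 4 (phi [b0,b1,b2,b3,b4])"
    unfolding depends_only_def phi_def by auto
  moreover have "phi [b0,b1,b2,b3,b4] \<noteq> (\<lambda>_. False)"
  proof
    assume "phi [b0,b1,b2,b3,b4] = (\<lambda>_. False)"
    then have "phi [b0,b1,b2,b3,b4] (\<lambda>_. True) = False" by simp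
    then show False using top_true unfolding phi_def by simp
  qed
  ultimately show ?thesis unfolding Fminus_def F_def by auto
qed

lemma leaf0: "\<exists>b0 b1 b2 b3 b4 e. \<forall>c0 c1 c2. F4 (tabs ! n5 [b0,b1,b2,b3,b4]) e c0 c1 c2 = F3 [False,False,False,False,False,False,False,True] c0 c1 c2"
proof -
  have "\<forall>c0 c1 c2. F4 (tabs ! n5 [False,False,False,False,False]) True c0 c1 c2 = F3 [False,False,False,False,False,False,False,True] c0 c1 c2"
    by (simp add: all_bool_eq F4_def F3_def b2n_def n5.simps tabs_def)
  then show ?thesis by blast
qed

lemma leaf1: "\<exists>b0 b1 b2 b3 b4 e. \<forall>c0 c1 c2. F4 (tabs ! n5 [b0,b1,b2,b3,b4]) e c0 c1 c2 = F3 [False,False,False,True,False,False,False,True] c0 c1 c2"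
proof -
  have "\<forall>c0 c1 c2. F4 (tabs ! n5 [False,False,False,True,False]) True c0 c1 c2 = F3 [False,False,False,True,False,False,False,True] c0 c1 c2"
    by (simp add: all_bool_eq F4_def F3_def b2n_def n5.simps tabs_def)
  then show ?thesis by blast
qed

lemma leaf2: "\<exists>b0 b1 b2 b3 b4 e. \<forall>c0 c1 c2. F4 (tabs ! n5 [b0,b1,b2,b3,b4]) e c0 c1 c2 = F3 [False,False,False,False,False,True,False,True] c0 c1 c2"
proof -
  have "\<forall>c0 c1 c2. F4 (tabs ! n5 [True,False,False,True,True]) False c0 c1 c2 = F3 [False,False,False,False,False,True,False,True] c0 c1 c2"
    by (simp add: all_bool_eq F4_def F3_def b2n_def n5.simps tabs_def)
  then show ?thesis by blast
qed

lemma leaf3: "\<exists>b0 b1 b2 b3 b4 e. \<forall>c0 c1 c2. F4 (tabs ! n5 [b0,b1,b2,b3,b4]) e c0 c1 c2 = F3 [False,False,False,True,False,True,False,True] c0 c1 c2"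
proof -
  have "\<forall>c0 c1 c2. F4 (tabs ! n5 [False,False,False,False,True]) True c0 c1 c2 = F3 [False,False,False,True,False,True,False,True] c0 c1 c2"
    by (simp add: all_bool_eq F4_def F3_def b2n_def n5.simps tabs_def)
  then show ?thesis by blast
qed

lemma leaf4: "\<exists>b0 b1 b2 b3 b4 e. \<forall>c0 c1 c2. F4 (tabs ! n5 [b0,b1,b2,b3,b4]) e c0 c1 c2 = F3 [False,True,False,True,False,True,False,True] c0 c1 c2"
proof -
  have "\<forall>c0 c1 c2. F4 (tabs ! n5 [True,False,True,True,True]) False c0 c1 c2 = F3 [False,True,False,True,False,True,False,True] c0 c1 c2"
    by (simp add: all_bool_eq F4_def F3_def b2n_def n5.simps tabs_def)
  then show ?thesis by blast
qed

lemma leaf5: "\<exists>b0 b1 b2 b3 b4 e. \<forall>c0 c1 c2. F4 (tabs ! n5 [b0,b1,b2,b3,b4]) e c0 c1 c2 = F3 [False,False,False,False,False,False,True,True] c0 c1 c2"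
proof -
  have "\<forall>c0 c1 c2. F4 (tabs ! n5 [False,False,True,False,False]) True c0 c1 c2 = F3 [False,False,False,False,False,False,True,True] c0 c1 c2"
    by (simp add: all_bool_eq F4_def F3_def b2n_def n5.simps tabs_def)
  then show ?thesis by blast
qed

lemma leaf6: "\<exists>b0 b1 b2 b3 b4 e. \<forall>c0 c1 c2. F4 (tabs ! n5 [b0,b1,b2,b3,b4]) e c0 c1 c2 = F3 [False,False,False,True,False,False,True,True] c0 c1 c2"
proof -
  have "\<forall>c0 c1 c2. F4 (tabs ! n5 [True,False,False,False,False]) True c0 c1 c2 = F3 [False,False,False,True,False,False,True,True] c0 c1 c2"
    by (simp add: all_bool_eq F4_def F3_def b2n_def n5.simps tabs_def)
  then show ?thesis by blast
qed

lemma leaf7: "\<exists>b0 b1 b2 b3 b4 e. \<forall>c0 c1 c2. F4 (tabs ! n5 [b0,b1,b2,b3,b4]) e c0 c1 c2 = F3 [False,False,True,True,False,False,True,True] c0 c1 c2"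
proof -
  have "\<forall>c0 c1 c2. F4 (tabs ! n5 [True,False,True,False,False]) True c0 c1 c2 = F3 [False,False,True,True,False,False,True,True] c0 c1 c2"
    by (simp add: all_bool_eq F4_def F3_def b2n_def n5.simps tabs_def)
  then show ?thesis by blast
qed

lemma leaf8: "\<exists>b0 b1 b2 b3 b4 e. \<forall>c0 c1 c2. F4 (tabs ! n5 [b0,b1,b2,b3,b4]) e c0 c1 c2 = F3 [False,False,False,False,False,True,True,True] c0 c1 c2"
proof -
  have "\<forall>c0 c1 c2. F4 (tabs ! n5 [True,True,False,True,True]) False c0 c1 c2 = F3 [False,False,False,False,False,True,True,True] c0 c1 c2"
    by (simp add: all_bool_eq F4_def F3_def b2n_def n5.simps tabs_def)
  then show ?thesis by blast
qed

lemma leaf9: "\<exists>b0 b1 b2 b3 b4 e. \<forall>c0 c1 c2. F4 (tabs ! n5 [b0,b1,b2,b3,b4]) e c0 c1 c2 = F3 [False,False,False,True,False,True,True,True] c0 c1 c2"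
proof -
  have "\<forall>c0 c1 c2. F4 (tabs ! n5 [True,False,False,True,False]) True c0 c1 c2 = F3 [False,False,False,True,False,True,True,True] c0 c1 c2"
    by (simp add: all_bool_eq F4_def F3_def b2n_def n5.simps tabs_def)
  then show ?thesis by blast
qed

lemma leaf10: "\<exists>b0 b1 b2 b3 b4 e. \<forall>c0 c1 c2. F4 (tabs ! n5 [b0,b1,b2,b3,b4]) e c0 c1 c2 = F3 [False,True,False,True,False,True,True,True] c0 c1 c2"
proof -
  have "\<forall>c0 c1 c2. F4 (tabs ! n5 [True,True,False,True,False]) True c0 c1 c2 = F3 [False,True,False,True,False,True,True,True] c0 c1 c2"
    by (simp add: all_bool_eq F4_def F3_def b2n_def n5.simps tabs_def)
  then show ?thesis by blast
qed

lemma leaf11: "\<exists>b0 b1 b2 b3 b4 e. \<forall>c0 c1 c2. F4 (tabs ! n5 [b0,b1,b2,b3,b4]) e c0 c1 c2 = F3 [False,False,True,True,False,True,True,True] c0 c1 c2"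
proof -
  have "\<forall>c0 c1 c2. F4 (tabs ! n5 [False,True,False,True,True]) True c0 c1 c2 = F3 [False,False,True,True,False,True,True,True] c0 c1 c2"
    by (simp add: all_bool_eq F4_def F3_def b2n_def n5.simps tabs_def)
  then show ?thesis by blast
qed

lemma leaf12: "\<exists>b0 b1 b2 b3 b4 e. \<forall>c0 c1 c2. F4 (tabs ! n5 [b0,b1,b2,b3,b4]) e c0 c1 c2 = F3 [False,True,True,True,False,True,True,True] c0 c1 c2"
proof -
  have "\<forall>c0 c1 c2. F4 (tabs ! n5 [True,False,True,True,False]) True c0 c1 c2 = F3 [False,True,True,True,False,True,True,True] c0 c1 c2"
    by (simp add: all_bool_eq F4_def F3_def b2n_def n5.simps tabs_def)
  then show ?thesis by blast
qed

lemma leaf13: "\<exists>b0 b1 b2 b3 b4 e. \<forall>c0 c1 c2. F4 (tabs ! n5 [b0,b1,b2,b3,b4]) e c0 c1 c2 = F3 [False,False,False,False,True,True,True,True] c0 c1 c2"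
proof -
  have "\<forall>c0 c1 c2. F4 (tabs ! n5 [False,True,True,False,False]) True c0 c1 c2 = F3 [False,False,False,False,True,True,True,True] c0 c1 c2"
    by (simp add: all_bool_eq F4_def F3_def b2n_def n5.simps tabs_def)
  then show ?thesis by blast
qed

lemma leaf14: "\<exists>b0 b1 b2 b3 b4 e. \<forall>c0 c1 c2. F4 (tabs ! n5 [b0,b1,b2,b3,b4]) e c0 c1 c2 = F3 [False,False,False,True,True,True,True,True] c0 c1 c2"
proof -
  have "\<forall>c0 c1 c2. F4 (tabs ! n5 [True,False,False,False,True]) True c0 c1 c2 = F3 [False,False,False,True,True,True,True,True] c0 c1 c2"
    by (simp add: all_bool_eq F4_def F3_def b2n_def n5.simps tabs_def)
  then show ?thesis by blast
qed

lemma leaf15: "\<exists>b0 b1 b2 b3 b4 e. \<forall>c0 c1 c2. F4 (tabs ! n5 [b0,b1,b2,b3,b4]) e c0 c1 c2 = F3 [False,True,False,True,True,True,True,True] c0 c1 c2"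
proof -
  have "\<forall>c0 c1 c2. F4 (tabs ! n5 [True,True,True,True,False]) False c0 c1 c2 = F3 [False,True,False,True,True,True,True,True] c0 c1 c2"
    by (simp add: all_bool_eq F4_def F3_def b2n_def n5.simps tabs_def)
  then show ?thesis by blast
qed

lemma leaf16: "\<exists>b0 b1 b2 b3 b4 e. \<forall>c0 c1 c2. F4 (tabs ! n5 [b0,b1,b2,b3,b4]) e c0 c1 c2 = F3 [False,False,True,True,True,True,True,True] c0 c1 c2"
proof -
  have "\<forall>c0 c1 c2. F4 (tabs ! n5 [False,True,True,True,False]) True c0 c1 c2 = F3 [False,False,True,True,True,True,True,True] c0 c1 c2"
    by (simp add: all_bool_eq F4_def F3_def b2n_def n5.simps tabs_def)
  then show ?thesis by blast
qed

lemma leaf17: "\<exists>b0 b1 b2 b3 b4 e. \<forall>c0 c1 c2. F4 (tabs ! n5 [b0,b1,b2,b3,b4]) e c0 c1 c2 = F3 [False,True,True,True,True,True,True,True] c0 c1 c2"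
proof -
  have "\<forall>c0 c1 c2. F4 (tabs ! n5 [True,False,True,False,True]) True c0 c1 c2 = F3 [False,True,True,True,True,True,True,True] c0 c1 c2"
    by (simp add: all_bool_eq F4_def F3_def b2n_def n5.simps tabs_def)
  then show ?thesis by blast
qed

lemma leaf18: "\<exists>b0 b1 b2 b3 b4 e. \<forall>c0 c1 c2. F4 (tabs ! n5 [b0,b1,b2,b3,b4]) e c0 c1 c2 = F3 [True,True,True,True,True,True,True,True] c0 c1 c2"
proof -
  have "\<forall>c0 c1 c2. F4 (tabs ! n5 [True,True,True,False,False]) True c0 c1 c2 = F3 [True,True,True,True,True,True,True,True] c0 c1 c2"
    by (simp add: all_bool_eq F4_def F3_def b2n_def n5.simps tabs_def)
  then show ?thesis by blast
qed

lemma cover_tab: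
  assumes "v0 \<le> v1" "v0 \<le> v2" "v0 \<le> v4" "v1 \<le> v3" "v1 \<le> v5" "v2 \<le> v3" "v2 \<le> v6"
    "v3 \<le> v7" "v4 \<le> v5" "v4 \<le> v6" "v5 \<le> v7" "v6 \<le> v7"
    "v0 \<or> v1 \<or> v2 \<or> v3 \<or> v4 \<or> v5 \<or> v6 \<or> v7"
  shows "\<exists>b0 b1 b2 b3 b4 e. \<forall>c0 c1 c2. F4 (tabs ! n5 [b0,b1,b2,b3,b4]) e c0 c1 c2 = F3 [v0,v1,v2,v3,v4,v5,v6,v7] c0 c1 c2"
proof -
  have imp: "v0 \<longrightarrow> v1" "v0 \<longrightarrow> v2" "v0 \<longrightarrow> v4" "v1 \<longrightarrow> v3" "v1 \<longrightarrow> v5" "v2 \<longrightarrow> v3" "v2 \<longrightarrow> v6"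
    "v3 \<longrightarrow> v7" "v4 \<longrightarrow> v5" "v4 \<longrightarrow> v6" "v5 \<longrightarrow> v7" "v6 \<longrightarrow> v7"
    using assms(1-12) by (auto simp: le_bool_def)
  have "(\<not> v0 \<and> \<not> v1 \<and> \<not> v2 \<and> \<not> v3 \<and> \<not> v4 \<and> \<not> v5 \<and> \<not> v6 \<and> v7) \<or>
    (\<not> v0 \<and> \<not> v1 \<and> \<not> v2 \<and> v3 \<and> \<not> v4 \<and> \<not> v5 \<and> \<not> v6 \<and> v7) \<or>
    (\<not> v0 \<and> \<not> v1 \<and> \<not> v2 \<and> \<not> v3 \<and> \<not> v4 \<and> v5 \<and> \<not> v6 \<and> v7) \<or>
    (\<not> v0 \<and> \<not> v1 \<and> \<not> v2 \<and> v3 \<and> \<not> v4 \<and> v5 \<and> \<not> v6 \<and> v7) \<or>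
    (\<not> v0 \<and> v1 \<and> \<not> v2 \<and> v3 \<and> \<not> v4 \<and> v5 \<and> \<not> v6 \<and> v7) \<or>
    (\<not> v0 \<and> \<not> v1 \<and> \<not> v2 \<and> \<not> v3 \<and> \<not> v4 \<and> \<not> v5 \<and> v6 \<and> v7) \<or>
    (\<not> v0 \<and> \<not> v1 \<and> \<not> v2 \<and> v3 \<and> \<not> v4 \<and> \<not> v5 \<and> v6 \<and> v7) \<or>
    (\<not> v0 \<and> \<not> v1 \<and> v2 \<and> v3 \<and> \<not> v4 \<and> \<not> v5 \<and> v6 \<and> v7) \<or>
    (\<not> v0 \<and> \<not> v1 \<and> \<not> v2 \<and> \<not> v3 \<and> \<not> v4 \<and> v5 \<and> v6 \<and> v7) \<or>
    (\<not> v0 \<and> \<not> v1 \<and> \<not> v2 \<and> v3 \<and> \<not> v4 \<and> v5 \<and> v6 \<and> v7) \<or>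
    (\<not> v0 \<and> v1 \<and> \<not> v2 \<and> v3 \<and> \<not> v4 \<and> v5 \<and> v6 \<and> v7) \<or>
    (\<not> v0 \<and> \<not> v1 \<and> v2 \<and> v3 \<and> \<not> v4 \<and> v5 \<and> v6 \<and> v7) \<or>
    (\<not> v0 \<and> v1 \<and> v2 \<and> v3 \<and> \<not> v4 \<and> v5 \<and> v6 \<and> v7) \<or>
    (\<not> v0 \<and> \<not> v1 \<and> \<not> v2 \<and> \<not> v3 \<and> v4 \<and> v5 \<and> v6 \<and> v7) \<or>
    (\<not> v0 \<and> \<not> v1 \<and> \<not> v2 \<and> v3 \<and> v4 \<and> v5 \<and> v6 \<and> v7) \<or>
    (\<not> v0 \<and> v1 \<and> \<not> v2 \<and> v3 \<and> v4 \<and> v5 \<and> v6 \<and> v7) \<or>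
    (\<not> v0 \<and> \<not> v1 \<and> v2 \<and> v3 \<and> v4 \<and> v5 \<and> v6 \<and> v7) \<or>
    (\<not> v0 \<and> v1 \<and> v2 \<and> v3 \<and> v4 \<and> v5 \<and> v6 \<and> v7) \<or>
    (v0 \<and> v1 \<and> v2 \<and> v3 \<and> v4 \<and> v5 \<and> v6 \<and> v7)"
    using imp assms(13) by sat
  then show ?thesis
    by (elim disjE; simp add: leaf0 leaf1 leaf2 leaf3 leaf4 leaf5 leaf6 leaf7 leaf8 leaf9 leaf10 leaf11 leaf12 leaf13 leaf14 leaf15 leaf16 leaf17 leaf18)
qed

definition pt :: "bool \<Rightarrow> bool \<Rightarrow> bool \<Rightarrow> nat \<Rightarrow> bool" where
  "pt b0 b1 b2 = (\<lambda>k. if k = 0 then b0 else if k = 1 then b1 else if k = 2 then b2 else False)"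

lemma cover:
  assumes f: "f \<in> Fminus 3"
  shows "\<exists>x e. f = subst1 (phi x) e \<and> x \<in> cube 5"
proof -
  from f have dep: "depends_only 3 f" and mon: "monotone_bf f" and nz: "f \<noteq> (\<lambda>_. False)"
    unfolding Fminus_def F_def by auto
  define w0 where "w0 = f (pt False False False)"
  define w1 where "w1 = f (pt True False False)"
  define w2 where "w2 = f (pt False True False)"
  define w3 where "w3 = f (pt True True False)"
  define w4 where "w4 = f (pt False False True)"
  define w5 where "w5 = f (pt True False True)"
  define w6 where "w6 = f (pt False True True)"
  define w7 where "w7 = f (pt True True True)"
  define v where "v = [w0,w1,w2,w3,w4,w5,w6,w7]"
  have rep: "f a = F3 v (a 0) (a 1) (a 2)" for a
  proof -
    have "\<forall>i<3. a i = pt (a 0) (a 1) (a 2) i"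
      by (auto simp: pt_def numeral_3_eq_3 numeral_2_eq_2 less_Suc_eq)
    then have "f a = f (pt (a 0) (a 1) (a 2))"
      using dep unfolding depends_only_def by blast
    then show ?thesis unfolding v_def F3_def b2n_def w0_def w1_def w2_def w3_def w4_def w5_def w6_def w7_def
      by (cases "a 0"; cases "a 1"; cases "a 2") simp_all
  qed
  have m: "f (pt a0 a1 a2) \<le> f (pt c0 c1 c2)" if "a0 \<le> c0" "a1 \<le> c1" "a2 \<le> c2" for a0 a1 a2 c0 c1 c2
  proof -
    have "\<forall>i. pt a0 a1 a2 i \<le> pt c0 c1 c2 i" using that unfolding pt_def by auto
    then show ?thesis using mon unfolding monotone_bf_def by blast
  qed
  obtain a where "f a" using nz by auto
  then have "F3 v (a 0) (a 1) (a 2)" using rep by simp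
  then have nzv: "w0 \<or> w1 \<or> w2 \<or> w3 \<or> w4 \<or> w5 \<or> w6 \<or> w7"
    unfolding F3_def b2n_def v_def by (cases "a 0"; cases "a 1"; cases "a 2") simp_all
  have "\<exists>b0 b1 b2 b3 b4 e. \<forall>c0 c1 c2. F4 (tabs ! n5 [b0,b1,b2,b3,b4]) e c0 c1 c2 = F3 [w0,w1,w2,w3,w4,w5,w6,w7] c0 c1 c2"
    by (rule cover_tab[OF _ _ _ _ _ _ _ _ _ _ _ _ nzv])
       (unfold w0_def w1_def w2_def w3_def w4_def w5_def w6_def w7_def; rule m; simp)+
  then obtain b0 b1 b2 b3 b4 e where H: "\<forall>c0 c1 c2. F4 (tabs ! n5 [b0,b1,b2,b3,b4]) e c0 c1 c2 = F3 v c0 c1 c2"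
    unfolding v_def by blast
  have "f = subst1 (phi [b0,b1,b2,b3,b4]) e"
    by (rule ext) (simp add: subst1_def phi_def H rep)
  then show ?thesis using cube5 by blast
qed

theorem mainTheorem11:
  shows "arrow 5 4"
  unfolding arrow_def
proof (intro exI conjI)
  show "inj_on phi (cube 5)"
    by (rule inj_onI) (auto simp: cube5 dest: phi_inj)
  show "phi ` cube 5 \<subseteq> Fminus 4"
    by (auto simp: cube5 phi_in)
  show "\<forall>x\<in>cube 5. \<forall>y\<in>cube 5. cube_le x y \<longrightarrow> phi x \<le> phi y"
  proof (intro ballI impI)
    fix x y assume "x \<in> cube 5" "y \<in> cube 5" and xy: "cube_le x y"
    then obtain a0 a1 a2 a3 a4 c0 c1 c2 c3 c4 where x: "x = [a0,a1,a2,a3,a4]" and y: "y = [c0,c1,c2,c3,c4]"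
      by (auto simp: cube5)
    from xy have le: "a0 \<le> c0" "a1 \<le> c1" "a2 \<le> c2" "a3 \<le> c3" "a4 \<le> c4" by (auto simp: cube_le_def x y)
    have "R [a0,a1,a2,a3,a4] [c0,c1,c2,c3,c4]"
      by (meson R_trans s0 s1 s2 s3 s4 le)
    then show "phi x \<le> phi y" unfolding x y by (rule R_phi)
  qed
  show "Fminus (4 - 1) \<subseteq> {subst1 (phi x) e |x e. x \<in> cube 5}"
  proof
    fix f assume "f \<in> Fminus (4 - 1)"
    then have "f \<in> Fminus 3" by simp
    then show "f \<in> {subst1 (phi x) e |x e. x \<in> cube 5}" using cover by blast
  qed
qed

end
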